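(* The GT system $(\mathcal L,\{r_0,r_1,r_2\})$ is terminating. Moreover, every derivation sequence $G=G_0\Rightarrow G_1\Rightarrow\cdots\Rightarrow G_n$ of this system starting from a TLRG $G$ has length $n\le 2|V_G|$.
   Context: Graphs over a label alphabet $(\mathcal L_V,\mathcal L_E)$ are tuples $G=(V,E,s,t,l,m,p)$ with $V,E$ finite, $s,t:E\to V$ total, $l:V\rightharpoonup\mathcal L_V$ partial, $m:E\to\mathcal L_E$ total, $p:V\rightharpoonup\{0,1\}$ partial (rootedness; $p(v)=1$ means $v$ is a root). TLRG = $l,p$ total. Morphisms preserve sources, targets, edge labels, and node labels and rootedness wherever defined. A rule $\langle L\leftarrow K\rightarrow R\rangle$ has TLRGs $L,R$ and a common subgraph $K$ (sets included, $s,t,m$ restricted, partial maps $l_K\subseteq l_L$, $p_K\subseteq p_L$, likewise for $R$). It is applied to a TLRG $G$ via an injective morphism $g:L\to G$ satisfying the dangling condition (no edge outside $g(L)$ incident to a node of $g(V_L\setminus V_K)$) by deleting images of items of $L$ not in $K$ and undefining label/rootedness of $g_V(v)$ where undefined for $v\in V_K$, then adding disjointly the items of $R$ not in $K$ and setting label/rootedness of $g_V(v)$ to $l_R(v)/p_R(v)$ where undefined in $K$; $G\Rightarrow H$ when $H$ is isomorphic to the result. A system is terminating if there is no infinite sequence $G_0\Rightarrow G_1\Rightarrow\cdots$. Here $\mathcal L=(\{\square,\triangle\},\{\square\})$ and all edges are labelled $\square$. Rule $r_0$: $L$ has an unrooted node $1$ labelled $\square$, a rooted node $2$ labelled $\square$,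 and an edge $1\to 2$; $K$ consists of node $1$ with undefined label and rootedness; $R$ consists of node $1$, rooted, labelled $\square$. Rule $r_1$: identical to $r_0$ except that node $1$ of $L$ is labelled $\triangle$. Rule $r_2$: $L$ has a rooted node $1$ labelled $\square$, an unrooted node $2$ labelled $\square$, and an edge $1\to 2$; $K$ consists of nodes $1,2$ with undefined labels and rootedness and no edges; $R$ has node $1$ unrooted labelled $\triangle$, node $2$ rooted labelled $\square$, and an edge $1\to 2$. *)

theory Defs
  imports Main
begin

datatype nlabel = Sq | Tri
datatype elabel = ESq

text \<open>A graph with node type 'v and edge type 'e.  Partial node labelling and
  rootedness are modelled by option-valued functions (None = undefined);
  only values on the carrier sets matter.\<close>
record ('v, 'e) graph =
  nodes :: "'v set"
  edges :: "'e set"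
  src   :: "'e \<Rightarrow> 'v"
  tgt   :: "'e \<Rightarrow> 'v"
  nlab  :: "'v \<Rightarrow> nlabel option"
  elab  :: "'e \<Rightarrow> elabel"
  root  :: "'v \<Rightarrow> bool option"

definition is_graph :: "('v, 'e) graph \<Rightarrow> bool" where
  "is_graph G \<longleftrightarrow> finite (nodes G) \<and> finite (edges G) \<and>
     (\<forall>e\<in>edges G. src G e \<in> nodes G \<and> tgt G e \<in> nodes G)"

definition tlrg :: "('v, 'e) graph \<Rightarrow> bool" where
  "tlrg G \<longleftrightarrow> is_graph G \<and> (\<forall>v\<in>nodes G. nlab G v \<noteq> None \<and> root G v \<noteq> None)"

definition morphism ::
  "('a, 'b) graph \<Rightarrow> ('c, 'd) graph \<Rightarrow> ('a \<Rightarrow> 'c) \<Rightarrow> ('b \<Rightarrow> 'd) \<Rightarrow> bool" where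
  "morphism A B gV gE \<longleftrightarrow>
     (\<forall>v\<in>nodes A. gV v \<in> nodes B) \<and> (\<forall>e\<in>edges A. gE e \<in> edges B) \<and>
     (\<forall>e\<in>edges A. src B (gE e) = gV (src A e) \<and> tgt B (gE e) = gV (tgt A e)
                   \<and> elab B (gE e) = elab A e) \<and>
     (\<forall>v\<in>nodes A. \<forall>x. nlab A v = Some x \<longrightarrow> nlab B (gV v) = Some x) \<and>
     (\<forall>v\<in>nodes A. \<forall>x. root A v = Some x \<longrightarrow> root B (gV v) = Some x)"

definition iso ::
  "('a, 'b) graph \<Rightarrow> ('c, 'd) graph \<Rightarrow> bool" where
  "iso A B \<longleftrightarrow> (\<exists>gV gE. bij_betw gV (nodes A) (nodes B) \<and> bij_betw gE (edges A) (edges B) \<and>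
     (\<forall>e\<in>edges A. src B (gE e) = gV (src A e) \<and> tgt B (gE e) = gV (tgt A e)
                   \<and> elab B (gE e) = elab A e) \<and>
     (\<forall>v\<in>nodes A. nlab B (gV v) = nlab A v \<and> root B (gV v) = root A v))"

type_synonym rule = "(nat, nat) graph \<times> (nat, nat) graph \<times> (nat, nat) graph"

definition lhs :: "rule \<Rightarrow> (nat, nat) graph" where "lhs r = fst r"
definition interf :: "rule \<Rightarrow> (nat, nat) graph" where "interf r = fst (snd r)"
definition rhs :: "rule \<Rightarrow> (nat, nat) graph" where "rhs r = snd (snd r)"

definition dangling_ok ::
  "rule \<Rightarrow> ('v, 'e) graph \<Rightarrow> (nat \<Rightarrow> 'v) \<Rightarrow> (nat \<Rightarrow> 'e) \<Rightarrow> bool" where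
  "dangling_ok r G gV gE \<longleftrightarrow>
     (\<forall>e\<in>edges G - gE ` edges (lhs r).
        src G e \<notin> gV ` (nodes (lhs r) - nodes (interf r)) \<and>
        tgt G e \<notin> gV ` (nodes (lhs r) - nodes (interf r)))"

text \<open>The result of applying rule r at match (gV, gE): kept items of G are
  tagged Inl, items added from R (not in K) are tagged Inr.\<close>
definition apply_rule ::
  "rule \<Rightarrow> ('v, 'e) graph \<Rightarrow> (nat \<Rightarrow> 'v) \<Rightarrow> (nat \<Rightarrow> 'e) \<Rightarrow> ('v + nat, 'e + nat) graph" where
  "apply_rule r G gV gE =
    (let L = lhs r; K = interf r; R = rhs r;
         kpre = (\<lambda>v. THE k. k \<in> nodes K \<and> gV k = v);
         mapR = (\<lambda>x. if x \<in> nodes K then Inl (gV x) else Inr x)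
     in \<lparr> nodes = Inl ` (nodes G - gV ` (nodes L - nodes K)) \<union> Inr ` (nodes R - nodes K),
          edges = Inl ` (edges G - gE ` (edges L - edges K)) \<union> Inr ` (edges R - edges K),
          src = (\<lambda>x. case x of Inl e \<Rightarrow> Inl (src G e) | Inr e \<Rightarrow> mapR (src R e)),
          tgt = (\<lambda>x. case x of Inl e \<Rightarrow> Inl (tgt G e) | Inr e \<Rightarrow> mapR (tgt R e)),
          nlab = (\<lambda>x. case x of
                    Inl v \<Rightarrow> (if v \<in> gV ` nodes K
                               then (if nlab K (kpre v) = None then nlab R (kpre v) else nlab G v)
                               else nlab G v)
                  | Inr v \<Rightarrow> nlab R v),
          elab = (\<lambda>x. case x of Inl e \<Rightarrow> elab G e | Inr e \<Rightarrow> elab R e),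
          root = (\<lambda>x. case x of
                    Inl v \<Rightarrow> (if v \<in> gV ` nodes K
                               then (if root K (kpre v) = None then root R (kpre v) else root G v)
                               else root G v)
                  | Inr v \<Rightarrow> root R v) \<rparr>)"

definition direct_derivation :: "rule \<Rightarrow> ('v, 'e) graph \<Rightarrow> ('v, 'e) graph \<Rightarrow> bool" where
  "direct_derivation r G H \<longleftrightarrow> tlrg G \<and> tlrg H \<and>
     (\<exists>gV gE. morphism (lhs r) G gV gE \<and> inj_on gV (nodes (lhs r)) \<and> inj_on gE (edges (lhs r))
              \<and> dangling_ok r G gV gE \<and> iso (apply_rule r G gV gE) H)"

definition step :: "rule set \<Rightarrow> ('v, 'e) graph \<Rightarrow> ('v, 'e) graph \<Rightarrow> bool" where
  "step Rs G H \<longleftrightarrow> (\<exists>r\<in>Rs. direct_derivation r G H)"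

definition terminating :: "rule set \<Rightarrow> ('v, 'e) graph itself \<Rightarrow> bool" where
  "terminating Rs _ \<longleftrightarrow> \<not> (\<exists>f :: nat \<Rightarrow> ('v, 'e) graph. \<forall>i. step Rs (f i) (f (Suc i)))"

definition r0 :: rule where
  "r0 = (\<lparr> nodes = {1, 2}, edges = {0}, src = (\<lambda>_. 1), tgt = (\<lambda>_. 2),
            nlab = [1 \<mapsto> Sq, 2 \<mapsto> Sq], elab = (\<lambda>_. ESq), root = [1 \<mapsto> False, 2 \<mapsto> True] \<rparr>,
         \<lparr> nodes = {1}, edges = {}, src = (\<lambda>_. 1), tgt = (\<lambda>_. 1),
            nlab = Map.empty, elab = (\<lambda>_. ESq), root = Map.empty \<rparr>,
         \<lparr> nodes = {1}, edges = {}, src = (\<lambda>_. 1), tgt = (\<lambda>_. 1),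
            nlab = [1 \<mapsto> Sq], elab = (\<lambda>_. ESq), root = [1 \<mapsto> True] \<rparr>)"

definition r1 :: rule where
  "r1 = (\<lparr> nodes = {1, 2}, edges = {0}, src = (\<lambda>_. 1), tgt = (\<lambda>_. 2),
            nlab = [1 \<mapsto> Tri, 2 \<mapsto> Sq], elab = (\<lambda>_. ESq), root = [1 \<mapsto> False, 2 \<mapsto> True] \<rparr>,
         \<lparr> nodes = {1}, edges = {}, src = (\<lambda>_. 1), tgt = (\<lambda>_. 1),
            nlab = Map.empty, elab = (\<lambda>_. ESq), root = Map.empty \<rparr>,
         \<lparr> nodes = {1}, edges = {}, src = (\<lambda>_. 1), tgt = (\<lambda>_. 1),
            nlab = [1 \<mapsto> Sq], elab = (\<lambda>_. ESq), root = [1 \<mapsto> True] \<rparr>)"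

definition r2 :: rule where
  "r2 = (\<lparr> nodes = {1, 2}, edges = {0}, src = (\<lambda>_. 1), tgt = (\<lambda>_. 2),
            nlab = [1 \<mapsto> Sq, 2 \<mapsto> Sq], elab = (\<lambda>_. ESq), root = [1 \<mapsto> True, 2 \<mapsto> False] \<rparr>,
         \<lparr> nodes = {1, 2}, edges = {}, src = (\<lambda>_. 1), tgt = (\<lambda>_. 1),
            nlab = Map.empty, elab = (\<lambda>_. ESq), root = Map.empty \<rparr>,
         \<lparr> nodes = {1, 2}, edges = {0}, src = (\<lambda>_. 1), tgt = (\<lambda>_. 2),
            nlab = [1 \<mapsto> Tri, 2 \<mapsto> Sq], elab = (\<lambda>_. ESq), root = [1 \<mapsto> False, 2 \<mapsto> True] \<rparr>)"

end

theory Submission imports Defs begin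

definition sqs :: "('v,'e) graph \<Rightarrow> 'v set" where
  "sqs G = {v \<in> nodes G. nlab G v = Some Sq}"

definition mu :: "('v,'e) graph \<Rightarrow> nat" where
  "mu G = card (nodes G) + card (sqs G)"

lemma iso_mu:
  assumes "iso A B" shows "mu B = mu A"
proof -
  obtain gV gE where b: "bij_betw gV (nodes A) (nodes B)"
    and l: "\<forall>v\<in>nodes A. nlab B (gV v) = nlab A v \<and> root B (gV v) = root A v"
    using assms unfolding iso_def by blast
  have "sqs B = gV ` sqs A"
    using b l unfolding sqs_def bij_betw_def by (auto; force)
  moreover have "inj_on gV (sqs A)" using b unfolding bij_betw_def sqs_def
    by (auto intro: inj_on_subset)
  ultimately have "card (sqs B) = card (sqs A)" by (simp add: card_image)
  moreover have "card (nodes B) = card (nodes A)" using b by (simp add: bij_betw_same_card)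
  ultimately show ?thesis unfolding mu_def by simp
qed

lemma r01_mu:
  assumes r: "r = r0 \<or> r = r1" and m: "morphism (lhs r) G gV gE" and fin: "finite (nodes G)"
  shows "mu (apply_rule r G gV gE) < mu G"
proof -
  let ?A = "apply_rule r G gV gE"
  have g2: "gV 2 \<in> nodes G" "nlab G (gV 2) = Some Sq"
    using m r unfolding morphism_def lhs_def r0_def r1_def by auto
  have nA: "nodes ?A = Inl ` (nodes G - {gV 2})"
    using r unfolding apply_rule_def lhs_def interf_def rhs_def r0_def r1_def by (auto simp: Let_def)
  have sA: "sqs ?A \<subseteq> Inl ` (insert (gV 1) (sqs G - {gV 2}))"
    using r unfolding sqs_def apply_rule_def lhs_def interf_def rhs_def r0_def r1_def
    by (auto simp: Let_def split: if_splits)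
  have f2: "finite (sqs G)" using fin unfolding sqs_def by auto
  have "card (nodes ?A) = card (nodes G - {gV 2})" unfolding nA by (simp add: card_image)
  also have "\<dots> = card (nodes G) - 1" using g2 fin by simp
  finally have c1: "card (nodes ?A) = card (nodes G) - 1" .
  have "card (sqs ?A) \<le> card (Inl ` (insert (gV 1) (sqs G - {gV 2})) :: ('a + nat) set)"
    using sA f2 by (intro card_mono) auto
  also have "\<dots> = card (insert (gV 1) (sqs G - {gV 2}))" by (meson card_image inj_Inl inj_on_subset subset_UNIV)
  also have "\<dots> \<le> Suc (card (sqs G - {gV 2}))" using f2 by (simp add: card_insert_le_m1)
  also have "\<dots> = card (sqs G)" using g2 f2 card_Suc_Diff1[of "sqs G" "gV 2"] unfolding sqs_def
    by simp
  finally have "card (sqs ?A) \<le> card (sqs G)" .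
  moreover have "card (nodes G) \<ge> 1" using g2 fin by (metis One_nat_def Suc_leI card_gt_0_iff empty_iff)
  ultimately show ?thesis unfolding mu_def using c1 by linarith
qed

lemma r2_mu:
  assumes m: "morphism (lhs r2) G gV gE" and inj: "inj_on gV (nodes (lhs r2))"
    and fin: "finite (nodes G)"
  shows "mu (apply_rule r2 G gV gE) < mu G"
proof -
  let ?A = "apply_rule r2 G gV gE"
  have g: "gV 1 \<in> nodes G" "nlab G (gV 1) = Some Sq" "gV 2 \<in> nodes G" "nlab G (gV 2) = Some Sq"
    using m unfolding morphism_def lhs_def r2_def by auto
  have ne: "gV 1 \<noteq> gV 2" using inj unfolding lhs_def r2_def by (auto dest: inj_onD)
  have k1: "(THE k. (k = 1 \<or> k = 2) \<and> gV k = gV 1) = 1" using ne by (intro the_equality) auto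
  have k2: "(THE k. (k = 1 \<or> k = 2) \<and> gV k = gV 2) = 2" using ne by (intro the_equality) auto
  have nA: "nodes ?A = Inl ` nodes G"
    unfolding apply_rule_def lhs_def interf_def rhs_def r2_def by (auto simp: Let_def)
  have sA: "sqs ?A \<subseteq> Inl ` (sqs G - {gV 1})"
  proof
    fix x assume x: "x \<in> sqs ?A"
    then obtain v where v: "x = Inl v" "v \<in> nodes G" using nA unfolding sqs_def by auto
    show "x \<in> Inl ` (sqs G - {gV 1})"
    proof (cases "v = gV 1 \<or> v = gV 2")
      case True
      then show ?thesis using x v k1 k2 ne g
        unfolding sqs_def apply_rule_def lhs_def interf_def rhs_def r2_def by (auto simp: Let_def)
    next
      case False
      then show ?thesis using x v
        unfolding sqs_def apply_rule_def lhs_def interf_def rhs_def r2_def by (auto simp: Let_def)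
    qed
  qed
  have f2: "finite (sqs G)" using fin unfolding sqs_def by auto
  have "card (sqs ?A) \<le> card (Inl ` (sqs G - {gV 1}) :: ('a + nat) set)"
    using sA f2 by (intro card_mono) auto
  also have "\<dots> = card (sqs G - {gV 1})" by (simp add: card_image)
  also have "\<dots> < card (sqs G)" using g f2 unfolding sqs_def
    by (intro psubset_card_mono) auto
  finally have "card (sqs ?A) < card (sqs G)" .
  moreover have "card (nodes ?A) = card (nodes G)" unfolding nA by (simp add: card_image)
  ultimately show ?thesis unfolding mu_def by linarith
qed

lemma step_mu:
  assumes "step {r0, r1, r2} G H" shows "mu H < mu G" "tlrg G"
proof -
  obtain r where r: "r \<in> {r0,r1,r2}" and d: "direct_derivation r G H" using assms unfolding step_def by blast
  then obtain gV gE where m: "morphism (lhs r) G gV gE" "inj_on gV (nodes (lhs r))"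
    and i: "iso (apply_rule r G gV gE) H" and t: "tlrg G"
    unfolding direct_derivation_def by blast
  have fin: "finite (nodes G)" using t unfolding tlrg_def is_graph_def by simp
  have "mu (apply_rule r G gV gE) < mu G"
    using r m fin r01_mu[of r G gV gE] r2_mu[of G gV gE] by auto
  then show "mu H < mu G" using iso_mu[OF i] by simp
  show "tlrg G" by fact
qed

lemma mu_le: assumes "finite (nodes G)" shows "mu G \<le> 2 * card (nodes G)"
proof -
  have "card (sqs G) \<le> card (nodes G)" using assms unfolding sqs_def by (intro card_mono) auto
  then show ?thesis unfolding mu_def by simp
qed

lemma chain_bound:
  assumes "\<forall>i<n. step {r0, r1, r2} (f i) (f (Suc i))"
  shows "mu (f n) + n \<le> mu (f 0)"
  using assms
proof (induction n)
  case 0 then show ?case by simp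
next
  case (Suc n)
  then have "mu (f n) + n \<le> mu (f 0)" by simp
  moreover have "mu (f (Suc n)) < mu (f n)" using Suc.prems step_mu by blast
  ultimately show ?case by simp
qed

theorem lemma4p5:
  shows "terminating {r0, r1, r2} TYPE(('v, 'e) graph) \<and>
         (\<forall>(f :: nat \<Rightarrow> ('v, 'e) graph) n.
            tlrg (f 0) \<and> (\<forall>i<n. step {r0, r1, r2} (f i) (f (Suc i)))
            \<longrightarrow> n \<le> 2 * card (nodes (f 0)))"
proof -
  have B: "\<And>(f :: nat \<Rightarrow> ('v, 'e) graph) n. (\<forall>i<n. step {r0, r1, r2} (f i) (f (Suc i)))
            \<Longrightarrow> n \<le> 2 * card (nodes (f 0))"
  proof -
    fix f :: "nat \<Rightarrow> ('v, 'e) graph" and n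
    assume a: "\<forall>i<n. step {r0, r1, r2} (f i) (f (Suc i))"
    show "n \<le> 2 * card (nodes (f 0))"
    proof (cases n)
      case 0 then show ?thesis by simp
    next
      case (Suc m)
      then have "tlrg (f 0)" using a step_mu(2) by blast
      then have "finite (nodes (f 0))" unfolding tlrg_def is_graph_def by simp
      then show ?thesis using chain_bound[OF a] mu_le by (metis le_add2 le_trans)
    qed
  qed
  have T: "terminating {r0, r1, r2} TYPE(('v, 'e) graph)"
    unfolding terminating_def
  proof
    assume "\<exists>f :: nat \<Rightarrow> ('v, 'e) graph. \<forall>i. step {r0, r1, r2} (f i) (f (Suc i))"
    then obtain f :: "nat \<Rightarrow> ('v, 'e) graph" where "\<forall>i. step {r0, r1, r2} (f i) (f (Suc i))" by blast
    then have "Suc (2 * card (nodes (f 0))) \<le> 2 * card (nodes (f 0))" using B by blast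
    then show False by simp
  qed
  show ?thesis using T B by blast
qed

end
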